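(* Let $p\in[0,1]$ and $n\in\mathbb N$. The families $(|C_1^{n,p}|,|C_2^{n,p}|,\dots)$ and $(Y_1^{(p)}(\tau_n),Y_2^{(p)}(\tau_n),\dots)$ have the same law.
   Context: A recursive tree on $[n]=\{1,\dots,n\}$ is a tree on vertex set $[n]$, rooted at $1$, such that the labels along the path from the root to any vertex are increasing. A random recursive tree $T_n$ is chosen uniformly among the $(n-1)!$ recursive trees on $[n]$. Perform Bernoulli bond percolation on $T_n$ with parameter $p$: each edge is erased independently with probability $1-p$ (kept with probability $p$). Let $C_1^{n,p},C_2^{n,p},\dots$ be the resulting connected components (clusters), enumerated in increasing order of the label of their smallest vertex, with $C_i^{n,p}=\emptyset$ if there are fewer than $i$ clusters; $|C|$ is the number of vertices of $C$. Separately, let $Z=(Z(t))_{t\ge0}$ be a standard Yule process (pure birth, rate $1$ per individual, $Z(0)=1$); each newborn is, independently, a clone of its parent with probability $p$ and a mutant of a new type with probability $1-p$; the ancestor has type $1$ and successive mutants receive types $2,3,\dots$ in order of birth. $Y_i^{(p)}(t)$ is the number of type-$i$ individuals at time $t$ (zero if none), and $\tau_n=\inf\{t\ge0: Z(t)=n\}$. *)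

theory Defs
  imports "HOL-Probability.Probability"
begin

text \<open>A recursive tree on [n] = {1..n}, rooted at 1, is encoded by its parent map:
  vertex k in {2..n} has parent par k.  The labels along the path from the root to any
  vertex are increasing iff every parent has a smaller label, i.e. par k \<in> {1..<k}.\<close>

definition recursive_trees :: "nat \<Rightarrow> (nat \<Rightarrow> nat) set" where
  "recursive_trees n = PiE {2..n} (\<lambda>k. {1..<k})"

text \<open>Percolation: keep k says whether the edge {k, par k} is kept.
  The kept edges as a (directed) relation; clusters are connected components.\<close>

definition kept_edges :: "nat \<Rightarrow> (nat \<Rightarrow> nat) \<Rightarrow> (nat \<Rightarrow> bool) \<Rightarrow> (nat \<times> nat) set" where
  "kept_edges n par keep = {(k, par k) | k. k \<in> {2..n} \<and> keep k}"

definition cluster :: "nat \<Rightarrow> (nat \<Rightarrow> nat) \<Rightarrow> (nat \<Rightarrow> bool) \<Rightarrow> nat \<Rightarrow> nat set" where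
  "cluster n par keep v =
     {w \<in> {1..n}. (v, w) \<in> (kept_edges n par keep \<union> (kept_edges n par keep)\<inverse>)\<^sup>*}"

definition clusters :: "nat \<Rightarrow> (nat \<Rightarrow> nat) \<Rightarrow> (nat \<Rightarrow> bool) \<Rightarrow> nat set set" where
  "clusters n par keep = cluster n par keep ` {1..n}"

text \<open>|C_i| for i \<ge> 1: clusters enumerated in increasing order of their smallest vertex;
  0 if there are fewer than i clusters.  By convention the value at index 0 is 0.\<close>

definition cluster_sizes :: "nat \<Rightarrow> (nat \<Rightarrow> nat) \<Rightarrow> (nat \<Rightarrow> bool) \<Rightarrow> nat \<Rightarrow> nat" where
  "cluster_sizes n par keep i =
     (let ms = sorted_list_of_set (Min ` clusters n par keep) in
      if 1 \<le> i \<and> i \<le> length ms then card (cluster n par keep (ms ! (i - 1))) else 0)"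

definition percolated_rrt :: "nat \<Rightarrow> real \<Rightarrow> ((nat \<Rightarrow> nat) \<times> (nat \<Rightarrow> bool)) pmf" where
  "percolated_rrt n p =
     pair_pmf (pmf_of_set (recursive_trees n)) (Pi_pmf {2..n} False (\<lambda>_. bernoulli_pmf p))"

text \<open>Standard construction of the Yule process (pure birth, rate 1 per individual) via its
  jump chain and holding times.  Individuals are numbered 1,2,3,... in order of birth.
  Coordinate k of \<omega> describes the (k+1)-th birth (of individual k+2), which happens when the
  population has size k+1: fst (\<omega> k) is the Exp(k+1) holding time before that birth,
  fst (snd (\<omega> k)) is the parent, uniform on the current individuals {1..k+1}, and
  snd (snd (\<omega> k)) is True iff the newborn is a clone (probability p).\<close>

type_synonym yule_omega = "nat \<Rightarrow> real \<times> nat \<times> bool"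

definition yule_space :: "real \<Rightarrow> yule_omega measure" where
  "yule_space p = PiM UNIV (\<lambda>k::nat.
      density lborel (exponential_density (real (Suc k)))
        \<Otimes>\<^sub>M (measure_pmf (pmf_of_set {1..Suc k}) \<Otimes>\<^sub>M measure_pmf (bernoulli_pmf p)))"

definition birth_time :: "yule_omega \<Rightarrow> nat \<Rightarrow> real" where
  "birth_time \<omega> j = (\<Sum>i<j - 1. fst (\<omega> i))"

text \<open>yule_types \<omega> k j: type of individual j after k births. The ancestor has type 1;
  the mutant born at birth k gets type (number of mutants among births 0..k) + 1.\<close>

primrec yule_types :: "yule_omega \<Rightarrow> nat \<Rightarrow> nat \<Rightarrow> nat" where
  "yule_types \<omega> 0 = (\<lambda>j. if j = 1 then 1 else 0)"
| "yule_types \<omega> (Suc k) = (yule_types \<omega> k)(k + 2 :=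
     (if snd (snd (\<omega> k)) then yule_types \<omega> k (fst (snd (\<omega> k)))
      else card {i. i \<le> k \<and> \<not> snd (snd (\<omega> i))} + 1))"

definition yule_type :: "yule_omega \<Rightarrow> nat \<Rightarrow> nat" where
  "yule_type \<omega> j = yule_types \<omega> (j - 1) j"

definition yule_Z :: "yule_omega \<Rightarrow> real \<Rightarrow> nat" where
  "yule_Z \<omega> t = card {j. 1 \<le> j \<and> birth_time \<omega> j \<le> t}"

definition yule_Y :: "yule_omega \<Rightarrow> nat \<Rightarrow> real \<Rightarrow> nat" where
  "yule_Y \<omega> i t = card {j. 1 \<le> j \<and> birth_time \<omega> j \<le> t \<and> yule_type \<omega> j = i}"

definition yule_tau :: "yule_omega \<Rightarrow> nat \<Rightarrow> real" where
  "yule_tau \<omega> n = Inf {t. 0 \<le> t \<and> yule_Z \<omega> t = n}"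

end

theory Submission
  imports Defs
begin


lemma sorted_rank:
  fixes A :: "nat set"
  assumes "finite A" "k < card A"
  shows "card {x\<in>A. x \<le> sorted_list_of_set A ! k} = Suc k"
proof -
  define xs where "xs = sorted_list_of_set A"
  have sx: "sorted_wrt (<) xs" unfolding xs_def by simp
  have lx: "length xs = card A" unfolding xs_def by simp
  have setx: "set xs = A" unfolding xs_def using assms by simp
  have dx: "distinct xs" unfolding xs_def by simp
  have "{x\<in>A. x \<le> xs ! k} = (\<lambda>i. xs ! i) ` {..k}"
  proof
    show "{x \<in> A. x \<le> xs ! k} \<subseteq> (!) xs ` {..k}"
    proof
      fix x assume "x \<in> {x \<in> A. x \<le> xs ! k}"
      then have xA: "x \<in> A" and xle: "x \<le> xs ! k" by auto
      then obtain i where i: "i < length xs" "xs ! i = x" using setx by (metis in_set_conv_nth)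
      have "i \<le> k"
      proof (rule ccontr)
        assume "\<not> i \<le> k"
        then have "k < i" by simp
        then have "xs ! k < xs ! i" using sx i by (metis sorted_wrt_nth_less)
        then show False using xle i by simp
      qed
      then show "x \<in> (!) xs ` {..k}" using i by auto
    qed
  next
    show "(!) xs ` {..k} \<subseteq> {x \<in> A. x \<le> xs ! k}"
    proof
      fix x assume "x \<in> (!) xs ` {..k}"
      then obtain i where i: "i \<le> k" "x = xs ! i" by auto
      have "xs ! i \<le> xs ! k" using i sx assms lx
        by (metis dual_order.order_iff_strict le_less_trans sorted_wrt_iff_nth_less)
      moreover have "xs ! i \<in> A" using i assms lx setx by auto
      ultimately show "x \<in> {x \<in> A. x \<le> xs ! k}" using i by auto
    qed
  qed
  moreover have "inj_on (\<lambda>i. xs ! i) {..k}" using dx assms lx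
    by (simp add: inj_on_def nth_eq_iff_index_eq)
  ultimately show ?thesis unfolding xs_def[symmetric] by (simp add: card_image)
qed

lemma clusters_types:
  fixes T :: "nat \<Rightarrow> nat" and Rt :: "nat set"
  assumes n1: "1 \<le> n" and par: "\<And>j. j \<in> {2..n} \<Longrightarrow> par j \<in> {1..<j}"
    and T1: "T 1 = 1"
    and Tj: "\<And>j. j \<in> {2..n} \<Longrightarrow> T j = (if keep j then T (par j) else card {r\<in>Rt. r \<le> j})"
    and Rt_def: "Rt = insert 1 {j\<in>{2..n}. \<not> keep j}"
  shows "cluster_sizes n par keep i = card {w\<in>{1..n}. T w = i}"
proof -
  define E where "E = kept_edges n par keep"
  define R where "R = E \<union> E\<inverse>"
  have finRt: "finite Rt" unfolding Rt_def by simp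
  have Rt_sub: "Rt \<subseteq> {1..n}" unfolding Rt_def using n1 by auto
  have Troot: "T r = card {x\<in>Rt. x \<le> r}" if "r \<in> Rt" for r
  proof (cases "r = 1")
    case True
    have "{x\<in>Rt. x \<le> r} = {1}" using True Rt_sub n1 unfolding Rt_def by auto
    then show ?thesis using True T1 by simp
  next
    case False
    then have "r \<in> {2..n}" "\<not> keep r" using that unfolding Rt_def by auto
    then show ?thesis using Tj[of r] by simp
  qed
  have Tmono: "T r < T r'" if "r \<in> Rt" "r' \<in> Rt" "r < r'" for r r'
  proof -
    have "r' \<in> {x\<in>Rt. x \<le> r'}" "r' \<notin> {x\<in>Rt. x \<le> r}" using that by auto
    then have "{x\<in>Rt. x \<le> r} \<subset> {x\<in>Rt. x \<le> r'}" using that by force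
    then have "card {x\<in>Rt. x \<le> r} < card {x\<in>Rt. x \<le> r'}"
      using finRt by (intro psubset_card_mono) auto
    then show ?thesis using Troot that by simp
  qed
  have Tinj: "r = r'" if "r \<in> Rt" "r' \<in> Rt" "T r = T r'" for r r'
    using Tmono[of r r'] Tmono[of r' r] that by (cases r r' rule: linorder_cases) auto
  have root: "\<exists>r\<in>Rt. r \<le> w \<and> T r = T w \<and> (w, r) \<in> R\<^sup>*" if "w \<in> {1..n}" for w
    using that
  proof (induction w rule: less_induct)
    case (less w)
    show ?case
    proof (cases "w = 1")
      case True
      then show ?thesis unfolding Rt_def by auto
    next
      case False
      then have w2: "w \<in> {2..n}" using less.prems by auto
      show ?thesis
      proof (cases "keep w")
        case False
        then have "w \<in> Rt" unfolding Rt_def using w2 by auto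
        then show ?thesis by auto
      next
        case True
        have pw: "par w \<in> {1..<w}" using par w2 by auto
        then have "par w \<in> {1..n}" using w2 by auto
        then obtain r where r: "r \<in> Rt" "r \<le> par w" "T r = T (par w)" "(par w, r) \<in> R\<^sup>*"
          using less.IH pw by auto
        have "(w, par w) \<in> E" unfolding E_def kept_edges_def using w2 True by auto
        then have "(w, par w) \<in> R" unfolding R_def by auto
        then have "(w, r) \<in> R\<^sup>*" using r(4) by (meson converse_rtrancl_into_rtrancl)
        moreover have "T w = T (par w)" using Tj[OF w2] True by simp
        ultimately show ?thesis using r pw by (intro bexI[of _ r]) auto
      qed
    qed
  qed
  have edge: "T a = T b \<and> a \<in> {1..n} \<and> b \<in> {1..n}" if "(a, b) \<in> R" for a b
  proof -
    have "(a, b) \<in> E \<or> (b, a) \<in> E" using that unfolding R_def by auto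
    moreover have "T k = T (par k) \<and> k \<in> {1..n} \<and> par k \<in> {1..n}" if "(k, par k) \<in> E" for k
    proof -
      from that obtain k' where "(k, par k) = (k', par k')" "k' \<in> {2..n}" "keep k'"
        unfolding E_def kept_edges_def by auto
      then have "k \<in> {2..n}" "keep k" by auto
      then show ?thesis using Tj[of k] par[of k] by auto
    qed
    ultimately show ?thesis unfolding E_def kept_edges_def by auto
  qed
  have path: "T v = T w \<and> w \<in> {1..n}" if "(v, w) \<in> R\<^sup>*" "v \<in> {1..n}" for v w
    using that(1)
  proof (induction rule: rtrancl_induct)
    case base
    then show ?case using that(2) by simp
  next
    case (step y z)
    then show ?case using edge[of y z] by auto
  qed
  have symR: "R\<inverse> = R" unfolding R_def by auto
  have cl: "cluster n par keep v = {w\<in>{1..n}. T w = T v}" if "v \<in> {1..n}" for v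
  proof
    show "cluster n par keep v \<subseteq> {w \<in> {1..n}. T w = T v}"
      unfolding cluster_def E_def[symmetric] R_def[symmetric] using path that by auto
  next
    show "{w \<in> {1..n}. T w = T v} \<subseteq> cluster n par keep v"
    proof
      fix w assume w: "w \<in> {w \<in> {1..n}. T w = T v}"
      obtain r where r: "r \<in> Rt" "T r = T v" "(v, r) \<in> R\<^sup>*" using root[OF \<open>v \<in> {1..n}\<close>] by auto
      obtain r' where r': "r' \<in> Rt" "T r' = T w" "(w, r') \<in> R\<^sup>*" using root[of w] w by auto
      have "r = r'" using Tinj r r' w by auto
      have "(r', w) \<in> (R\<inverse>)\<^sup>*" using r'(3) by (simp add: rtrancl_converseI)
      then have "(r', w) \<in> R\<^sup>*" using symR by simp
      then have "(v, w) \<in> R\<^sup>*" using r(3) \<open>r = r'\<close> by simp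
      then show "w \<in> cluster n par keep v"
        unfolding cluster_def E_def[symmetric] R_def[symmetric] using w by auto
    qed
  qed
  have minroot: "Min (cluster n par keep v) \<in> Rt \<and> T (Min (cluster n par keep v)) = T v"
    if "v \<in> {1..n}" for v
  proof -
    obtain r where r: "r \<in> Rt" "r \<le> v" "T r = T v" using root[OF \<open>v \<in> {1..n}\<close>] by auto
    have rin: "r \<in> cluster n par keep v" using cl[OF that] r Rt_sub by auto
    have "r \<le> w" if "w \<in> cluster n par keep v" for w
    proof -
      have w: "w \<in> {1..n}" "T w = T v" using that cl \<open>v \<in> {1..n}\<close> by auto
      obtain r' where r': "r' \<in> Rt" "r' \<le> w" "T r' = T w" using root[OF w(1)] by auto
      have "r' = r" using Tinj r r' w by auto
      then show ?thesis using r' by simp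
    qed
    moreover have "finite (cluster n par keep v)" unfolding cluster_def by simp
    ultimately have "Min (cluster n par keep v) = r" using rin
      by (meson Min_eqI)
    then show ?thesis using r by simp
  qed
  have MinRt: "Min ` clusters n par keep = Rt"
  proof
    show "Min ` clusters n par keep \<subseteq> Rt" unfolding clusters_def using minroot by auto
  next
    show "Rt \<subseteq> Min ` clusters n par keep"
    proof
      fix r assume r: "r \<in> Rt"
      then have rn: "r \<in> {1..n}" using Rt_sub by auto
      have "Min (cluster n par keep r) = r" using minroot[OF rn] Tinj r by auto
      then show "r \<in> Min ` clusters n par keep" unfolding clusters_def using rn by force
    qed
  qed
  define ms where "ms = sorted_list_of_set Rt"
  have lms: "length ms = card Rt" unfolding ms_def by simp
  have Trange: "T w \<in> {1..card Rt}" if wn: "w \<in> {1..n}" for w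
  proof -
    obtain r where r: "r \<in> Rt" "T r = T w" using root[OF wn] by auto
    have "T r = card {x\<in>Rt. x \<le> r}" using Troot r by simp
    moreover have "card {x\<in>Rt. x \<le> r} \<le> card Rt" using finRt by (intro card_mono) auto
    moreover have "card {x\<in>Rt. x \<le> r} \<ge> 1"
    proof -
      have "r \<in> {x\<in>Rt. x \<le> r}" using r by auto
      moreover have "finite {x\<in>Rt. x \<le> r}" using finRt by auto
      ultimately have "card {x\<in>Rt. x \<le> r} \<noteq> 0" by auto
      then show ?thesis by linarith
    qed
    ultimately show ?thesis using r by simp
  qed
  have csd: "cluster_sizes n par keep i =
     (if 1 \<le> i \<and> i \<le> length ms then card (cluster n par keep (ms ! (i - 1))) else 0)"
    by (simp only: cluster_sizes_def Let_def MinRt ms_def)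
  have setms: "set ms = Rt" unfolding ms_def using finRt by simp
  show ?thesis
  proof (cases "1 \<le> i \<and> i \<le> length ms")
    case True
    define r where "r = ms ! (i - 1)"
    have il: "i - 1 < length ms" using True by linarith
    have rRt: "r \<in> Rt" unfolding r_def using nth_mem[OF il] setms by simp
    have "T r = card {x\<in>Rt. x \<le> r}" using Troot rRt by simp
    also have "\<dots> = Suc (i - 1)" unfolding r_def ms_def
      using sorted_rank[OF finRt, of "i - 1"] il lms by simp
    also have "\<dots> = i" using True by simp
    finally have Tr: "T r = i" .
    have "cluster_sizes n par keep i = card (cluster n par keep r)"
      using csd True r_def by simp
    also have "cluster n par keep r = {w\<in>{1..n}. T w = i}"
      using cl[of r] rRt Rt_sub Tr by auto
    finally show ?thesis .
  next
    case False
    have "T w \<noteq> i" if "w \<in> {1..n}" for w using Trange[OF that] False lms by auto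
    then have "{w\<in>{1..n}. T w = i} = {}" by auto
    have "cluster_sizes n par keep i = 0" by (simp only: csd if_not_P[OF False])
    then show ?thesis using \<open>{w\<in>{1..n}. T w = i} = {}\<close> by simp
  qed
qed

primrec ty :: "(nat \<Rightarrow> nat) \<Rightarrow> (nat \<Rightarrow> bool) \<Rightarrow> nat \<Rightarrow> nat \<Rightarrow> nat" where
  "ty par keep 0 = (\<lambda>j. if j = 1 then 1 else 0)"
| "ty par keep (Suc k) = (ty par keep k)(k + 2 :=
     (if keep (k + 2) then ty par keep k (par (k + 2))
      else card {i. i \<le> k \<and> \<not> keep (i + 2)} + 1))"

lemma ty_props:
  assumes "\<And>j. j \<in> {2..k+1} \<Longrightarrow> par j \<in> {1..<j}"
  shows "ty par keep k 1 = 1 \<and> (\<forall>j\<in>{2..k+1}. ty par keep k j =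
     (if keep j then ty par keep k (par j) else card {i. i \<le> j - 2 \<and> \<not> keep (i + 2)} + 1))"
  using assms
proof (induction k)
  case 0
  then show ?case by simp
next
  case (Suc k)
  have IH: "ty par keep k 1 = 1 \<and> (\<forall>j\<in>{2..k+1}. ty par keep k j =
     (if keep j then ty par keep k (par j) else card {i. i \<le> j - 2 \<and> \<not> keep (i + 2)} + 1))"
    using Suc.IH Suc.prems by auto
  have p: "par j \<in> {1..<j}" if "j \<in> {2..Suc k + 1}" for j using Suc.prems that by blast
  have a: "ty par keep (Suc k) 1 = 1" using IH by simp
  have b: "ty par keep (Suc k) j =
     (if keep j then ty par keep (Suc k) (par j) else card {i. i \<le> j - 2 \<and> \<not> keep (i + 2)} + 1)"
    if j: "j \<in> {2..Suc k+1}" for j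
  proof -
    have pj: "par j \<noteq> k + 2" "par j < j" using p[OF j] j by auto
    then have e: "ty par keep (Suc k) (par j) = ty par keep k (par j)" by simp
    show ?thesis
    proof (cases "j = k + 2")
      case True
      then have "j - 2 = k" by simp
      then show ?thesis using True e by simp
    next
      case False
      then have "j \<in> {2..k+1}" using j by auto
      then show ?thesis using IH False e by simp
    qed
  qed
  show ?case using a b by blast
qed

lemma card_rank_eq:
  fixes j n :: nat
  assumes "j \<in> {2..n}"
  shows "card {i. i \<le> j - 2 \<and> \<not> keep (i + 2)} + 1
       = card {r \<in> insert 1 {j\<in>{2..n}. \<not> keep j}. r \<le> j}"
proof -
  have "{r \<in> insert 1 {j\<in>{2..n}. \<not> keep j}. r \<le> j}
      = insert 1 ((\<lambda>i. i + 2) ` {i. i \<le> j - 2 \<and> \<not> keep (i + 2)})"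
  proof (rule set_eqI, rule iffI)
    fix x assume "x \<in> {r \<in> insert 1 {j\<in>{2..n}. \<not> keep j}. r \<le> j}"
    then have x: "x = 1 \<or> (2 \<le> x \<and> x \<le> j \<and> \<not> keep x)" by auto
    show "x \<in> insert 1 ((\<lambda>i. i + 2) ` {i. i \<le> j - 2 \<and> \<not> keep (i + 2)})"
    proof (cases "x = 1")
      case False
      then have x2: "2 \<le> x" "x \<le> j" "\<not> keep x" using x by auto
      then have e: "x - 2 + 2 = x" by simp
      have "x - 2 \<in> {i. i \<le> j - 2 \<and> \<not> keep (i + 2)}" using x2 e by simp
      then have "x - 2 + 2 \<in> (\<lambda>i. i + 2) ` {i. i \<le> j - 2 \<and> \<not> keep (i + 2)}" by blast
      then show ?thesis using e by simp
    qed simp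
  next
    fix x assume "x \<in> insert 1 ((\<lambda>i. i + 2) ` {i. i \<le> j - 2 \<and> \<not> keep (i + 2)})"
    then show "x \<in> {r \<in> insert 1 {j\<in>{2..n}. \<not> keep j}. r \<le> j}"
      using assms by auto
  qed
  moreover have "finite {i. i \<le> j - 2 \<and> \<not> keep (i + 2)}" by simp
  moreover have "1 \<notin> (\<lambda>i. i + 2) ` {i. i \<le> j - 2 \<and> \<not> keep (i + 2)}" by auto
  ultimately show ?thesis by (simp add: card_image inj_on_def)
qed

lemma cluster_sizes_ty:
  assumes n1: "1 \<le> n" and par: "par \<in> recursive_trees n"
  shows "cluster_sizes n par keep i = card {w\<in>{1..n}. ty par keep (n - 1) w = i}"
proof -
  have p: "par j \<in> {1..<j}" if "j \<in> {2..n}" for j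
    using par that unfolding recursive_trees_def by (auto simp: PiE_iff)
  have tp: "ty par keep (n - 1) 1 = 1 \<and> (\<forall>j\<in>{2..n - 1 + 1}. ty par keep (n - 1) j =
     (if keep j then ty par keep (n - 1) (par j) else card {i. i \<le> j - 2 \<and> \<not> keep (i + 2)} + 1))"
    using n1 by (intro ty_props) (use p n1 in auto)
  show ?thesis
  proof (rule clusters_types[OF n1, where Rt = "insert 1 {j\<in>{2..n}. \<not> keep j}"])
    show "\<And>j. j \<in> {2..n} \<Longrightarrow> par j \<in> {1..<j}" by (rule p)
    show "ty par keep (n - 1) 1 = 1" using tp by simp
    show "ty par keep (n - 1) j = (if keep j then ty par keep (n - 1) (par j)
            else card {r \<in> insert 1 {j \<in> {2..n}. \<not> keep j}. r \<le> j})" if "j \<in> {2..n}" for j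
    proof -
      have "j \<in> {2..n - 1 + 1}" using that n1 by auto
      then show ?thesis using tp card_rank_eq[OF that, of keep] by simp
    qed
  qed simp
qed




definition Mk :: "real \<Rightarrow> nat \<Rightarrow> (real \<times> nat \<times> bool) measure" where
  "Mk p k = density lborel (exponential_density (real (Suc k)))
        \<Otimes>\<^sub>M (measure_pmf (pmf_of_set {1..Suc k}) \<Otimes>\<^sub>M measure_pmf (bernoulli_pmf p))"

lemma yule_space_Mk: "yule_space p = PiM UNIV (Mk p)"
  unfolding yule_space_def Mk_def by simp

lemma prob_space_Mk: "prob_space (Mk p k)"
  unfolding Mk_def
  by (intro prob_space_pair prob_space_exponential_density prob_space_measure_pmf) auto

lemma pps_Mk: "product_prob_space (Mk p)"
  by (intro product_prob_spaceI prob_space_Mk)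

lemma prob_space_yule: "prob_space (yule_space p)"
  unfolding yule_space_Mk by (intro prob_space_PiM prob_space_Mk)

lemma sets_pmf_pair:
  "sets (measure_pmf (A :: 'a::countable pmf) \<Otimes>\<^sub>M measure_pmf (B :: 'b::countable pmf)) = sets (count_space UNIV)"
proof -
  have "sets (measure_pmf A \<Otimes>\<^sub>M measure_pmf B) = sets (count_space (UNIV::'a set) \<Otimes>\<^sub>M count_space (UNIV::'b set))"
    by (intro sets_pair_measure_cong) auto
  also have "\<dots> = sets (count_space (UNIV \<times> UNIV))"
    by (subst pair_measure_countable) auto
  finally show ?thesis by (simp only: UNIV_Times_UNIV)
qed

lemma meas_h: "(\<lambda>\<omega>. fst (\<omega> i)) \<in> borel_measurable (yule_space p)"
proof -
  have "(\<lambda>\<omega>. \<omega> i) \<in> measurable (yule_space p) (Mk p i)"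
    unfolding yule_space_Mk by (rule measurable_component_singleton) simp
  then have "(\<lambda>\<omega>. fst (\<omega> i)) \<in> measurable (yule_space p) (density lborel (exponential_density (real (Suc i))))"
    unfolding Mk_def by (rule measurable_compose[OF _ measurable_fst])
  moreover have "measurable (yule_space p) (density lborel (exponential_density (real (Suc i))))
      = borel_measurable (yule_space p)" by (intro measurable_cong_sets) auto
  ultimately show ?thesis by simp
qed

lemma meas_s: "(\<lambda>\<omega>. snd (\<omega> i)) \<in> measurable (yule_space p) (count_space UNIV)"
proof -
  have "(\<lambda>\<omega>. \<omega> i) \<in> measurable (yule_space p) (Mk p i)"
    unfolding yule_space_Mk by (rule measurable_component_singleton) simp
  then have "(\<lambda>\<omega>. snd (\<omega> i)) \<in> measurable (yule_space p)
      (measure_pmf (pmf_of_set {1..Suc i}) \<Otimes>\<^sub>M measure_pmf (bernoulli_pmf p))"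
    unfolding Mk_def by (rule measurable_compose[OF _ measurable_snd])
  moreover have "measurable (yule_space p) (measure_pmf (pmf_of_set {1..Suc i}) \<Otimes>\<^sub>M measure_pmf (bernoulli_pmf p))
      = measurable (yule_space p) (count_space UNIV)" by (intro measurable_cong_sets sets_pmf_pair refl)
  ultimately show ?thesis by simp
qed

definition vlist :: "nat \<Rightarrow> yule_omega \<Rightarrow> (nat \<times> bool) list" where
  "vlist m \<omega> = map (\<lambda>i. snd (\<omega> i)) [0..<m]"

definition dec :: "nat \<Rightarrow> (nat \<times> bool) list \<Rightarrow> (nat \<Rightarrow> nat) \<times> (nat \<Rightarrow> bool)" where
  "dec n l = ((\<lambda>k. if k \<in> {2..n} then fst (l ! (k - 2)) else undefined),
              (\<lambda>k. if k \<in> {2..n} then snd (l ! (k - 2)) else False))"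

definition G :: "nat \<Rightarrow> yule_omega \<Rightarrow> (nat \<Rightarrow> nat) \<times> (nat \<Rightarrow> bool)" where
  "G n \<omega> = dec n (vlist (n - 1) \<omega>)"

lemma G_fst: "k \<in> {2..n} \<Longrightarrow> fst (G n \<omega>) k = fst (snd (\<omega> (k - 2)))"
  unfolding G_def dec_def vlist_def by auto

lemma G_snd: "k \<in> {2..n} \<Longrightarrow> snd (G n \<omega>) k = snd (snd (\<omega> (k - 2)))"
  unfolding G_def dec_def vlist_def by auto

lemma types_eq: "k \<le> n - 1 \<Longrightarrow> yule_types \<omega> k = ty (fst (G n \<omega>)) (snd (G n \<omega>)) k"
proof (induction k)
  case 0
  then show ?case by (simp add: fun_eq_iff)
next
  case (Suc k)
  have k2: "k + 2 \<in> {2..n}" using Suc.prems by auto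
  have IH: "yule_types \<omega> k = ty (fst (G n \<omega>)) (snd (G n \<omega>)) k" using Suc by simp
  have a: "snd (G n \<omega>) (k + 2) = snd (snd (\<omega> k))" using G_snd[OF k2] by simp
  have b: "fst (G n \<omega>) (k + 2) = fst (snd (\<omega> k))" using G_fst[OF k2] by simp
  have c: "{i. i \<le> k \<and> \<not> snd (snd (\<omega> i))} = {i. i \<le> k \<and> \<not> snd (G n \<omega>) (i + 2)}"
  proof -
    have "snd (G n \<omega>) (i + 2) = snd (snd (\<omega> i))" if "i \<le> k" for i
      using G_snd[of "i + 2" n \<omega>] that Suc.prems by auto
    then show ?thesis by auto
  qed
  show ?case by (simp only: yule_types.simps ty.simps a b c IH)
qed

lemma ty_stable: "j \<le> k + 1 \<Longrightarrow> k \<le> m \<Longrightarrow> ty par keep m j = ty par keep k j"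
proof (induction m)
  case 0
  then show ?case by simp
next
  case (Suc m)
  show ?case
  proof (cases "k = Suc m")
    case False
    then have "k \<le> m" using Suc.prems by simp
    then show ?thesis using Suc by simp
  qed simp
qed

lemma yule_type_G:
  assumes "1 \<le> j" "j \<le> n"
  shows "yule_type \<omega> j = ty (fst (G n \<omega>)) (snd (G n \<omega>)) (n - 1) j"
proof -
  have "yule_type \<omega> j = ty (fst (G n \<omega>)) (snd (G n \<omega>)) (j - 1) j"
    unfolding yule_type_def using types_eq[of "j - 1" n] assms by simp
  also have "\<dots> = ty (fst (G n \<omega>)) (snd (G n \<omega>)) (n - 1) j"
    using assms by (intro ty_stable[symmetric]) auto
  finally show ?thesis .
qed

lemma meas_vlist: "vlist m \<in> measurable (yule_space p) (count_space UNIV)"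
proof (induction m)
  case 0
  have "vlist 0 = (\<lambda>\<omega>. [])" unfolding vlist_def by (simp add: fun_eq_iff)
  then show ?case by (metis measurable_const UNIV_I space_count_space)
next
  case (Suc m)
  define f where "f = (\<lambda>(l::(nat \<times> bool) list) (\<omega>::yule_omega). l @ [snd (\<omega> m)])"
  have eq: "vlist (Suc m) = (\<lambda>\<omega>. f (vlist m \<omega>) \<omega>)"
    unfolding vlist_def f_def by (simp add: fun_eq_iff)
  have fm: "(\<lambda>\<omega>. f l \<omega>) \<in> measurable (yule_space p) (count_space UNIV)" for l
  proof -
    have "(\<lambda>\<omega>. f l \<omega>) = (\<lambda>\<omega>. (\<lambda>b. l @ [b]) (snd (\<omega> m)))" unfolding f_def by simp
    also have "\<dots> \<in> measurable (yule_space p) (count_space UNIV)"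
      by (rule measurable_compose[OF meas_s measurable_count_space])
    finally show ?thesis .
  qed
  show ?case unfolding eq by (rule measurable_compose_countable[OF fm Suc.IH])
qed

lemma meas_G: "G n \<in> measurable (yule_space p) (count_space UNIV)"
proof -
  have "G n = (\<lambda>\<omega>. dec n (vlist (n - 1) \<omega>))" unfolding G_def by (simp add: fun_eq_iff)
  also have "\<dots> \<in> measurable (yule_space p) (count_space UNIV)"
    by (rule measurable_compose[OF meas_vlist measurable_count_space])
  finally show ?thesis .
qed

lemma meas_type: "(\<lambda>\<omega>. yule_type \<omega> j) \<in> measurable (yule_space p) (count_space UNIV)"
proof (cases "j = 0")
  case True
  then have "(\<lambda>\<omega>. yule_type \<omega> j) = (\<lambda>\<omega>. 0)" unfolding yule_type_def by (simp add: fun_eq_iff)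
  then show ?thesis by (metis measurable_const UNIV_I space_count_space)
next
  case False
  have "yule_type \<omega> j = (\<lambda>x. ty (fst x) (snd x) (j - 1) j) (G j \<omega>)" for \<omega>
    using yule_type_G[of j j \<omega>] False by simp
  then have "(\<lambda>\<omega>. yule_type \<omega> j) = (\<lambda>\<omega>. (\<lambda>x. ty (fst x) (snd x) (j - 1) j) (G j \<omega>))"
    by (simp only: fun_eq_iff) simp
  also have "\<dots> \<in> measurable (yule_space p) (count_space UNIV)"
    by (rule measurable_compose[OF meas_G measurable_count_space])
  finally show ?thesis .
qed

lemma meas_bt: "(\<lambda>\<omega>. birth_time \<omega> j) \<in> borel_measurable (yule_space p)"
  unfolding birth_time_def by (intro borel_measurable_sum meas_h)

lemma measurable_card_pred:
  assumes P: "\<And>j::nat. Measurable.pred M (P j)"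
  shows "(\<lambda>x. card {j. P j x}) \<in> measurable M (count_space UNIV)"
proof (subst measurable_count_space_eq2_countable, intro conjI ballI)
  show "(\<lambda>x. card {j. P j x}) \<in> space M \<rightarrow> UNIV" by simp
  fix m :: nat
  have eq: "(\<lambda>x. card {j. P j x}) -` {m} \<inter> space M =
    {x\<in>space M. (\<exists>J\<in>{J. finite J \<and> card J = m}. \<forall>j. P j x = (j \<in> J))
       \<or> (m = 0 \<and> \<not> (\<exists>J\<in>Collect finite. \<forall>j. P j x = (j \<in> J)))}"
  proof (rule set_eqI)
    fix x
    show "x \<in> (\<lambda>x. card {j. P j x}) -` {m} \<inter> space M \<longleftrightarrow> x \<in> {x\<in>space M. (\<exists>J\<in>{J. finite J \<and> card J = m}. \<forall>j. P j x = (j \<in> J))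
       \<or> (m = 0 \<and> \<not> (\<exists>J\<in>Collect finite. \<forall>j. P j x = (j \<in> J)))}"
    proof (cases "finite {j. P j x}")
      case True
      have "(\<exists>J\<in>{J. finite J \<and> card J = m}. \<forall>j. P j x = (j \<in> J)) \<longleftrightarrow> card {j. P j x} = m"
      proof
        assume "\<exists>J\<in>{J. finite J \<and> card J = m}. \<forall>j. P j x = (j \<in> J)"
        then obtain J where "card J = m" "\<forall>j. P j x = (j \<in> J)" by auto
        moreover then have "{j. P j x} = J" by auto
        ultimately show "card {j. P j x} = m" by simp
      next
        assume "card {j. P j x} = m"
        then show "\<exists>J\<in>{J. finite J \<and> card J = m}. \<forall>j. P j x = (j \<in> J)"
          using True by (intro bexI[of _ "{j. P j x}"]) auto
      qed
      moreover have "\<exists>J\<in>Collect finite. \<forall>j. P j x = (j \<in> J)"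
        using True by (intro bexI[of _ "{j. P j x}"]) auto
      ultimately show ?thesis by auto
    next
      case False
      have "\<not> (\<exists>J\<in>Collect finite. \<forall>j. P j x = (j \<in> J))"
      proof
        assume "\<exists>J\<in>Collect finite. \<forall>j. P j x = (j \<in> J)"
        then obtain J where "finite J" "\<forall>j. P j x = (j \<in> J)" by auto
        then have "{j. P j x} = J" by auto
        then show False using False \<open>finite J\<close> by simp
      qed
      moreover have "\<not> (\<exists>J\<in>{J. finite J \<and> card J = m}. \<forall>j. P j x = (j \<in> J))"
        using calculation by auto
      ultimately show ?thesis using False by auto
    qed
  qed
  have c1: "countable {J::nat set. finite J \<and> card J = m}"
    by (rule countable_subset[OF _ countable_Collect_finite]) auto
  have c2: "countable (Collect finite :: nat set set)" by (rule countable_Collect_finite)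
  have "Measurable.pred M (\<lambda>x. (\<exists>J\<in>{J. finite J \<and> card J = m}. \<forall>j. P j x = (j \<in> J))
       \<or> (m = 0 \<and> \<not> (\<exists>J\<in>Collect finite. \<forall>j. P j x = (j \<in> J))))"
    using c1 c2 P by measurable
  then show "(\<lambda>x. card {j. P j x}) -` {m} \<inter> space M \<in> sets M"
    unfolding eq pred_def by simp
qed

lemma exists_t_iff:
  fixes b :: "nat \<Rightarrow> real" and J :: "nat set"
  assumes fJ: "finite J"
  shows "(\<exists>t. 0 \<le> t \<and> t < a \<and> (\<forall>j. (1 \<le> j \<and> b j \<le> t) = (j \<in> J))) \<longleftrightarrow>
    (0 \<notin> J \<and> 0 < a \<and> (\<forall>j\<in>J. b j < a) \<and> (\<forall>j\<in>J. \<forall>k. 1 \<le> k \<longrightarrow> k \<notin> J \<longrightarrow> b j < b k)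
      \<and> (\<forall>k. 1 \<le> k \<longrightarrow> k \<notin> J \<longrightarrow> 0 < b k))"
proof
  assume "\<exists>t. 0 \<le> t \<and> t < a \<and> (\<forall>j. (1 \<le> j \<and> b j \<le> t) = (j \<in> J))"
  then obtain t where t: "0 \<le> t" "t < a" "\<And>j. (1 \<le> j \<and> b j \<le> t) = (j \<in> J)" by auto
  have "0 \<notin> J" using t(3)[of 0] by simp
  moreover have "0 < a" using t by simp
  moreover have "\<forall>j\<in>J. b j < a"
  proof
    fix j assume "j \<in> J"
    then have "b j \<le> t" using t(3)[of j] by simp
    then show "b j < a" using t(2) by simp
  qed
  moreover have "\<forall>j\<in>J. \<forall>k. 1 \<le> k \<longrightarrow> k \<notin> J \<longrightarrow> b j < b k"
  proof (intro ballI allI impI)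
    fix j k assume "j \<in> J" "1 \<le> k" "k \<notin> J"
    then have "b j \<le> t" "\<not> b k \<le> t" using t(3)[of j] t(3)[of k] by auto
    then show "b j < b k" by simp
  qed
  moreover have "\<forall>k. 1 \<le> k \<longrightarrow> k \<notin> J \<longrightarrow> 0 < b k"
  proof (intro allI impI)
    fix k assume "1 \<le> k" "k \<notin> J"
    then have "\<not> b k \<le> t" using t(3)[of k] by auto
    then show "0 < b k" using t(1) by simp
  qed
  ultimately show "0 \<notin> J \<and> 0 < a \<and> (\<forall>j\<in>J. b j < a) \<and> (\<forall>j\<in>J. \<forall>k. 1 \<le> k \<longrightarrow> k \<notin> J \<longrightarrow> b j < b k)
      \<and> (\<forall>k. 1 \<le> k \<longrightarrow> k \<notin> J \<longrightarrow> 0 < b k)" by blast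
next
  assume H: "0 \<notin> J \<and> 0 < a \<and> (\<forall>j\<in>J. b j < a) \<and> (\<forall>j\<in>J. \<forall>k. 1 \<le> k \<longrightarrow> k \<notin> J \<longrightarrow> b j < b k)
      \<and> (\<forall>k. 1 \<le> k \<longrightarrow> k \<notin> J \<longrightarrow> 0 < b k)"
  define t where "t = Max (insert 0 (b ` J))"
  have fin: "finite (insert 0 (b ` J))" using fJ by simp
  have t0: "0 \<le> t" unfolding t_def using fin by simp
  have tj: "b j \<le> t" if "j \<in> J" for j unfolding t_def using fin that by simp
  have "t \<in> insert 0 (b ` J)" unfolding t_def using fin by (intro Max_in) auto
  then have ta: "t < a" using H by auto
  have "(1 \<le> j \<and> b j \<le> t) = (j \<in> J)" for j
  proof
    assume j: "1 \<le> j \<and> b j \<le> t"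
    show "j \<in> J"
    proof (rule ccontr)
      assume "j \<notin> J"
      then have "0 < b j" "\<forall>i\<in>J. b i < b j" using H j by auto
      then have "\<forall>x\<in>insert 0 (b ` J). x < b j" by auto
      then have "t < b j" unfolding t_def using fin by simp
      then show False using j by simp
    qed
  next
    assume "j \<in> J"
    then have "j \<noteq> 0" using H by (metis)
    then show "1 \<le> j \<and> b j \<le> t" using tj \<open>j \<in> J\<close> by simp
  qed
  then show "\<exists>t. 0 \<le> t \<and> t < a \<and> (\<forall>j. (1 \<le> j \<and> b j \<le> t) = (j \<in> J))"
    using t0 ta by blast
qed

definition Qt :: "nat \<Rightarrow> real \<Rightarrow> yule_omega \<Rightarrow> bool" where
  "Qt n a \<omega> = (\<exists>t. 0 \<le> t \<and> t < a \<and> yule_Z \<omega> t = n)"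

lemma Qt_iff:
  assumes "1 \<le> n"
  shows "Qt n a \<omega> \<longleftrightarrow> (\<exists>J\<in>{J. finite J \<and> card J = n}.
     0 \<notin> J \<and> 0 < a \<and> (\<forall>j\<in>J. birth_time \<omega> j < a)
     \<and> (\<forall>j\<in>J. \<forall>k. 1 \<le> k \<longrightarrow> k \<notin> J \<longrightarrow> birth_time \<omega> j < birth_time \<omega> k)
     \<and> (\<forall>k. 1 \<le> k \<longrightarrow> k \<notin> J \<longrightarrow> 0 < birth_time \<omega> k))"
proof -
  have "Qt n a \<omega> \<longleftrightarrow> (\<exists>J\<in>{J. finite J \<and> card J = n}.
      \<exists>t. 0 \<le> t \<and> t < a \<and> (\<forall>j. (1 \<le> j \<and> birth_time \<omega> j \<le> t) = (j \<in> J)))"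
  proof
    assume "Qt n a \<omega>"
    then obtain t where t: "0 \<le> t" "t < a" "card {j. 1 \<le> j \<and> birth_time \<omega> j \<le> t} = n"
      unfolding Qt_def yule_Z_def by auto
    then have "finite {j. 1 \<le> j \<and> birth_time \<omega> j \<le> t}"
      using assms by (metis card.infinite not_one_le_zero)
    then show "\<exists>J\<in>{J. finite J \<and> card J = n}.
      \<exists>t. 0 \<le> t \<and> t < a \<and> (\<forall>j. (1 \<le> j \<and> birth_time \<omega> j \<le> t) = (j \<in> J))"
      using t by (intro bexI[of _ "{j. 1 \<le> j \<and> birth_time \<omega> j \<le> t}"]) auto
  next
    assume "\<exists>J\<in>{J. finite J \<and> card J = n}.
      \<exists>t. 0 \<le> t \<and> t < a \<and> (\<forall>j. (1 \<le> j \<and> birth_time \<omega> j \<le> t) = (j \<in> J))"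
    then obtain J t where J: "card J = n" "0 \<le> t" "t < a" "\<forall>j. (1 \<le> j \<and> birth_time \<omega> j \<le> t) = (j \<in> J)"
      by auto
    then have "{j. 1 \<le> j \<and> birth_time \<omega> j \<le> t} = J" by auto
    then show "Qt n a \<omega>" unfolding Qt_def yule_Z_def using J by auto
  qed
  also have "\<dots> \<longleftrightarrow> (\<exists>J\<in>{J. finite J \<and> card J = n}.
     0 \<notin> J \<and> 0 < a \<and> (\<forall>j\<in>J. birth_time \<omega> j < a)
     \<and> (\<forall>j\<in>J. \<forall>k. 1 \<le> k \<longrightarrow> k \<notin> J \<longrightarrow> birth_time \<omega> j < birth_time \<omega> k)
     \<and> (\<forall>k. 1 \<le> k \<longrightarrow> k \<notin> J \<longrightarrow> 0 < birth_time \<omega> k))"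
    by (rule bex_cong[OF refl], rule exists_t_iff) simp
  finally show ?thesis .
qed

lemma meas_Qt:
  assumes "1 \<le> n"
  shows "Measurable.pred (yule_space p) (Qt n a)"
proof -
  have c1: "countable {J::nat set. finite J \<and> card J = n}"
    by (rule countable_subset[OF _ countable_Collect_finite]) auto
  have bt: "\<And>j. (\<lambda>\<omega>. birth_time \<omega> j) \<in> borel_measurable (yule_space p)" by (rule meas_bt)
  have "Measurable.pred (yule_space p) (\<lambda>\<omega>. \<exists>J\<in>{J. finite J \<and> card J = n}.
     0 \<notin> J \<and> 0 < a \<and> (\<forall>j\<in>J. birth_time \<omega> j < a)
     \<and> (\<forall>j\<in>J. \<forall>k. 1 \<le> k \<longrightarrow> k \<notin> J \<longrightarrow> birth_time \<omega> j < birth_time \<omega> k)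
     \<and> (\<forall>k. 1 \<le> k \<longrightarrow> k \<notin> J \<longrightarrow> 0 < birth_time \<omega> k))"
    using c1 bt by measurable
  moreover have "Qt n a = (\<lambda>\<omega>. \<exists>J\<in>{J. finite J \<and> card J = n}.
     0 \<notin> J \<and> 0 < a \<and> (\<forall>j\<in>J. birth_time \<omega> j < a)
     \<and> (\<forall>j\<in>J. \<forall>k. 1 \<le> k \<longrightarrow> k \<notin> J \<longrightarrow> birth_time \<omega> j < birth_time \<omega> k)
     \<and> (\<forall>k. 1 \<le> k \<longrightarrow> k \<notin> J \<longrightarrow> 0 < birth_time \<omega> k))"
    by (rule ext, rule Qt_iff[OF assms])
  ultimately show ?thesis by simp
qed

lemma tau_less_iff:
  "yule_tau \<omega> n < a \<longleftrightarrow> ((\<exists>m::nat. Qt n (real m) \<omega>) \<and> Qt n a \<omega>) \<or>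
     (\<not> (\<exists>m::nat. Qt n (real m) \<omega>) \<and> Inf ({}::real set) < a)"
proof -
  define W where "W = {t. 0 \<le> t \<and> yule_Z \<omega> t = n}"
  have tau: "yule_tau \<omega> n = Inf W" unfolding yule_tau_def W_def by simp
  have Q: "Qt n b \<omega> \<longleftrightarrow> (\<exists>t\<in>W. t < b)" for b unfolding Qt_def W_def by auto
  have ne: "(\<exists>m::nat. Qt n (real m) \<omega>) \<longleftrightarrow> W \<noteq> {}"
  proof
    assume "\<exists>m::nat. Qt n (real m) \<omega>"
    then show "W \<noteq> {}" using Q by auto
  next
    assume "W \<noteq> {}"
    then obtain t where "t \<in> W" by auto
    moreover obtain m :: nat where "t < real m" using reals_Archimedean2 by auto
    ultimately show "\<exists>m::nat. Qt n (real m) \<omega>" using Q by auto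
  qed
  show ?thesis
  proof (cases "W = {}")
    case True
    then show ?thesis using ne tau by simp
  next
    case False
    have "bdd_below W" unfolding W_def by (intro bdd_belowI[of _ 0]) auto
    then have "Inf W < a \<longleftrightarrow> (\<exists>t\<in>W. t < a)" using False by (simp add: cInf_less_iff)
    then show ?thesis using ne tau Q False by simp
  qed
qed

lemma meas_tau:
  assumes "1 \<le> n"
  shows "(\<lambda>\<omega>. yule_tau \<omega> n) \<in> borel_measurable (yule_space p)"
proof (subst borel_measurable_iff_less, intro allI)
  fix a :: real
  have q: "\<And>b. Measurable.pred (yule_space p) (Qt n b)" by (rule meas_Qt[OF assms])
  have "Measurable.pred (yule_space p) (\<lambda>\<omega>. ((\<exists>m::nat. Qt n (real m) \<omega>) \<and> Qt n a \<omega>) \<or>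
     (\<not> (\<exists>m::nat. Qt n (real m) \<omega>) \<and> Inf ({}::real set) < a))"
    apply (rule pred_intros_logic(5))
     apply (rule pred_intros_logic(3))
      apply (rule pred_intros_countable(2))
      apply (rule q)
     apply (rule q)
    apply (rule pred_intros_conj2')
    apply (rule pred_intros_logic(2))
    apply (rule pred_intros_countable(2))
    apply (rule q)
    done
  then have "Measurable.pred (yule_space p) (\<lambda>\<omega>. yule_tau \<omega> n < a)"
    by (simp only: tau_less_iff)
  then show "{w \<in> space (yule_space p). yule_tau w n < a} \<in> sets (yule_space p)"
    by (simp add: pred_def)
qed

lemma meas_Y:
  assumes "1 \<le> n"
  shows "(\<lambda>\<omega>. \<lambda>i. yule_Y \<omega> i (yule_tau \<omega> n)) \<in> measurable (yule_space p)
           (PiM UNIV (\<lambda>_::nat. count_space (UNIV :: nat set)))"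
proof (rule measurable_PiM_single')
  fix i :: nat
  have bt: "\<And>j. (\<lambda>\<omega>. birth_time \<omega> j) \<in> borel_measurable (yule_space p)" by (rule meas_bt)
  have ta: "(\<lambda>\<omega>. yule_tau \<omega> n) \<in> borel_measurable (yule_space p)" by (rule meas_tau[OF assms])
  have ty: "\<And>j. (\<lambda>\<omega>. yule_type \<omega> j) \<in> measurable (yule_space p) (count_space UNIV)" by (rule meas_type)
  have "\<And>j. Measurable.pred (yule_space p)
          (\<lambda>\<omega>. 1 \<le> j \<and> birth_time \<omega> j \<le> yule_tau \<omega> n \<and> yule_type \<omega> j = i)"
  proof -
    fix j
    have a: "Measurable.pred (yule_space p) (\<lambda>\<omega>. birth_time \<omega> j \<le> yule_tau \<omega> n)"
      unfolding pred_def by (rule borel_measurable_le[OF bt ta])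
    have b: "Measurable.pred (yule_space p) (\<lambda>\<omega>. yule_type \<omega> j = i)"
      by (rule pred_count_space_const1[OF ty])
    show "Measurable.pred (yule_space p)
          (\<lambda>\<omega>. 1 \<le> j \<and> birth_time \<omega> j \<le> yule_tau \<omega> n \<and> yule_type \<omega> j = i)"
      by (rule pred_intros_conj1', rule pred_intros_logic(3)[OF a b])
  qed
  then have "(\<lambda>\<omega>. card {j. 1 \<le> j \<and> birth_time \<omega> j \<le> yule_tau \<omega> n \<and> yule_type \<omega> j = i})
     \<in> measurable (yule_space p) (count_space UNIV)"
    by (rule measurable_card_pred)
  then show "(\<lambda>\<omega>. yule_Y \<omega> i (yule_tau \<omega> n)) \<in> measurable (yule_space p) (count_space UNIV)"
    unfolding yule_Y_def .
qed (auto simp: space_PiM)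

lemma AE_exp_pos: "AE x in density lborel (exponential_density (real (Suc k))). 0 < x"
proof -
  have "AE x in lborel. 0 < ennreal (exponential_density (real (Suc k)) x) \<longrightarrow> 0 < x"
    using AE_lborel_singleton[of "0::real"]
  proof (rule AE_mp, intro AE_I2 impI)
    fix x :: real assume "x \<noteq> 0" "0 < ennreal (exponential_density (real (Suc k)) x)"
    then show "0 < x" by (cases "x < 0") (auto simp: exponential_density_def)
  qed
  then show ?thesis by (subst AE_density) auto
qed

lemma AE_pos: "AE \<omega> in yule_space p. \<forall>i. 0 < fst (\<omega> i)"
proof (subst AE_all_countable, intro allI)
  fix i :: nat
  have ps: "prob_space (measure_pmf (pmf_of_set {1..Suc i}) \<Otimes>\<^sub>M measure_pmf (bernoulli_pmf p))"
    by (intro prob_space_pair prob_space_measure_pmf)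
  have "AE x in Mk p i. 0 < fst x"
  proof -
    have "AE x in distr (Mk p i) (density lborel (exponential_density (real (Suc i)))) fst. 0 < x"
      unfolding Mk_def by (subst prob_space.distr_pair_fst[OF ps]) (rule AE_exp_pos)
    then show ?thesis unfolding Mk_def by (rule AE_distrD[OF measurable_fst])
  qed
  then have "AE x in distr (yule_space p) (Mk p i) (\<lambda>\<omega>. \<omega> i). 0 < fst x"
    unfolding yule_space_Mk by (subst distr_PiM_component) (auto intro: prob_space_Mk)
  then show "AE \<omega> in yule_space p. 0 < fst (\<omega> i)"
    by (rule AE_distrD[rotated]) (simp add: yule_space_Mk)
qed

lemma bt_Suc: "1 \<le> j \<Longrightarrow> birth_time \<omega> (Suc j) = birth_time \<omega> j + fst (\<omega> (j - 1))"
  unfolding birth_time_def by (cases j) auto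

lemma bt_mono:
  assumes pos: "\<forall>i. 0 < fst (\<omega> i)" and "1 \<le> j" "j < k"
  shows "birth_time \<omega> j < birth_time \<omega> k"
  using assms(3)
proof (induction k)
  case 0
  then show ?case by simp
next
  case (Suc k)
  have k1: "1 \<le> k" using Suc.prems assms(2) by simp
  have "birth_time \<omega> k < birth_time \<omega> (Suc k)" using bt_Suc[OF k1] pos by simp
  moreover have "birth_time \<omega> j \<le> birth_time \<omega> k"
    using Suc by (cases "j = k") auto
  ultimately show ?case by simp
qed

lemma bt_le_iff:
  assumes pos: "\<forall>i. 0 < fst (\<omega> i)" and "1 \<le> j" "1 \<le> k"
  shows "birth_time \<omega> j \<le> birth_time \<omega> k \<longleftrightarrow> j \<le> k"
proof (cases j k rule: linorder_cases)
  case less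
  then show ?thesis using bt_mono[OF pos assms(2) less] by simp
next
  case equal
  then show ?thesis by simp
next
  case greater
  then show ?thesis using bt_mono[OF pos assms(3) greater] by simp
qed

lemma Y_eq:
  assumes n1: "1 \<le> n" and pos: "\<forall>i. 0 < fst (\<omega> i)"
  shows "(\<lambda>i. yule_Y \<omega> i (yule_tau \<omega> n))
       = (\<lambda>i. card {w\<in>{1..n}. ty (fst (G n \<omega>)) (snd (G n \<omega>)) (n - 1) w = i})"
proof -
  define b where "b = birth_time \<omega>"
  have set_bn: "{j. 1 \<le> j \<and> b j \<le> b n} = {1..n}"
  proof (rule set_eqI)
    fix j
    show "j \<in> {j. 1 \<le> j \<and> b j \<le> b n} \<longleftrightarrow> j \<in> {1..n}"
    proof (cases "1 \<le> j")
      case True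
      then show ?thesis using bt_le_iff[OF pos True n1] unfolding b_def by simp
    qed simp
  qed
  have b1: "b 1 = 0" unfolding b_def birth_time_def by simp
  have bn0: "0 \<le> b n"
  proof (cases "n = 1")
    case True then show ?thesis using b1 by simp
  next
    case False then show ?thesis using bt_mono[OF pos, of 1 n] n1 b1 unfolding b_def by simp
  qed
  have tau: "yule_tau \<omega> n = b n"
    unfolding yule_tau_def
  proof (rule cInf_eq_minimum)
    show "b n \<in> {t. 0 \<le> t \<and> yule_Z \<omega> t = n}"
      using bn0 set_bn unfolding yule_Z_def b_def by simp
  next
    fix t assume t: "t \<in> {t. 0 \<le> t \<and> yule_Z \<omega> t = n}"
    show "b n \<le> t"
    proof (rule ccontr)
      assume "\<not> b n \<le> t"
      then have tb: "t < b n" by simp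
      have "{j. 1 \<le> j \<and> b j \<le> t} \<subseteq> {1..n - 1}"
      proof
        fix j assume j: "j \<in> {j. 1 \<le> j \<and> b j \<le> t}"
        have "\<not> n \<le> j"
        proof
          assume "n \<le> j"
          then have "b n \<le> b j" using bt_le_iff[OF pos n1, of j] j unfolding b_def by simp
          then show False using j tb by simp
        qed
        then show "j \<in> {1..n - 1}" using j by simp
      qed
      then have "card {j. 1 \<le> j \<and> b j \<le> t} \<le> card {1..n - 1}"
        by (intro card_mono) simp_all
      then have "card {j. 1 \<le> j \<and> b j \<le> t} \<le> n - 1" by simp
      then show False using t n1 unfolding yule_Z_def b_def by simp
    qed
  qed
  show ?thesis
  proof (rule ext)
    fix i
    have "yule_Y \<omega> i (yule_tau \<omega> n) = card {j. 1 \<le> j \<and> b j \<le> b n \<and> yule_type \<omega> j = i}"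
      unfolding yule_Y_def tau b_def by simp
    also have "{j. 1 \<le> j \<and> b j \<le> b n \<and> yule_type \<omega> j = i}
       = {w\<in>{1..n}. ty (fst (G n \<omega>)) (snd (G n \<omega>)) (n - 1) w = i}"
    proof -
      have "{j. 1 \<le> j \<and> b j \<le> b n \<and> yule_type \<omega> j = i} = {j\<in>{j. 1 \<le> j \<and> b j \<le> b n}. yule_type \<omega> j = i}"
        by blast
      also have "\<dots> = {j\<in>{1..n}. yule_type \<omega> j = i}" unfolding set_bn ..
      also have "\<dots> = {w\<in>{1..n}. ty (fst (G n \<omega>)) (snd (G n \<omega>)) (n - 1) w = i}"
      proof (rule Collect_cong)
        fix j
        show "(j \<in> {1..n} \<and> yule_type \<omega> j = i) = (j \<in> {1..n} \<and> ty (fst (G n \<omega>)) (snd (G n \<omega>)) (n - 1) j = i)"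
        proof (cases "j \<in> {1..n}")
          case True
          then have "yule_type \<omega> j = ty (fst (G n \<omega>)) (snd (G n \<omega>)) (n - 1) j"
            by (intro yule_type_G) auto
          then show ?thesis by simp
        next
          case False
          then show ?thesis by blast
        qed
      qed
      finally show ?thesis .
    qed
    finally show "yule_Y \<omega> i (yule_tau \<omega> n) = card {w\<in>{1..n}. ty (fst (G n \<omega>)) (snd (G n \<omega>)) (n - 1) w = i}" .
  qed
qed

lemma dec_eq_iff: "dec n l1 = dec n l2 \<longleftrightarrow> (\<forall>i<n - 1. l1 ! i = l2 ! i)"
proof
  assume H: "dec n l1 = dec n l2"
  show "\<forall>i<n - 1. l1 ! i = l2 ! i"
  proof (intro allI impI)
    fix i assume i: "i < n - 1"
    then have k: "i + 2 \<in> {2..n}" by auto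
    have "fst (dec n l1) (i + 2) = fst (dec n l2) (i + 2)" "snd (dec n l1) (i + 2) = snd (dec n l2) (i + 2)"
      using H by simp_all
    then have "fst (l1 ! i) = fst (l2 ! i)" "snd (l1 ! i) = snd (l2 ! i)"
      using k unfolding dec_def by simp_all
    then show "l1 ! i = l2 ! i" by (rule prod_eqI)
  qed
next
  assume H: "\<forall>i<n - 1. l1 ! i = l2 ! i"
  have "l1 ! (k - 2) = l2 ! (k - 2)" if "k \<in> {2..n}" for k using H that by auto
  then show "dec n l1 = dec n l2" unfolding dec_def by (auto simp: fun_eq_iff)
qed

lemma space_Mk: "space (Mk p i) = UNIV"
  unfolding Mk_def by (simp add: space_pair_measure)

lemma space_yule: "space (yule_space p) = UNIV"
  unfolding yule_space_Mk by (simp add: space_PiM space_Mk)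

lemma G_preimage:
  "G n -` {dec n l} \<inter> space (yule_space p)
     = prod_emb UNIV (Mk p) {..<n - 1} (\<Pi>\<^sub>E i\<in>{..<n - 1}. UNIV \<times> {l ! i})"
proof (rule set_eqI)
  fix \<omega> :: yule_omega
  have "\<omega> \<in> G n -` {dec n l} \<inter> space (yule_space p) \<longleftrightarrow> G n \<omega> = dec n l"
    unfolding space_yule by simp
  also have "\<dots> \<longleftrightarrow> (\<forall>i<n - 1. vlist (n - 1) \<omega> ! i = l ! i)"
    unfolding G_def by (rule dec_eq_iff)
  also have "\<dots> \<longleftrightarrow> (\<forall>i<n - 1. snd (\<omega> i) = l ! i)"
    unfolding vlist_def by simp
  also have "\<dots> \<longleftrightarrow> (\<forall>i\<in>{..<n - 1}. \<omega> i \<in> UNIV \<times> {l ! i})"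
    by (auto simp: mem_Times_iff)
  also have "\<dots> \<longleftrightarrow> restrict \<omega> {..<n - 1} \<in> (\<Pi>\<^sub>E i\<in>{..<n - 1}. UNIV \<times> {l ! i})"
    by (rule restrict_PiE_iff[symmetric])
  also have "\<dots> \<longleftrightarrow> \<omega> \<in> prod_emb UNIV (Mk p) {..<n - 1} (\<Pi>\<^sub>E i\<in>{..<n - 1}. UNIV \<times> {l ! i})"
    unfolding prod_emb_iff space_Mk by simp
  finally show "\<omega> \<in> G n -` {dec n l} \<inter> space (yule_space p) \<longleftrightarrow>
     \<omega> \<in> prod_emb UNIV (Mk p) {..<n - 1} (\<Pi>\<^sub>E i\<in>{..<n - 1}. UNIV \<times> {l ! i})" .
qed

lemma emeasure_Mk_point:
  "emeasure (Mk p i) (UNIV \<times> {x})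
     = ennreal (pmf (pmf_of_set {1..Suc i}) (fst x) * pmf (bernoulli_pmf p) (snd x))"
proof -
  let ?D = "density lborel (exponential_density (real (Suc i)))"
  let ?Q = "measure_pmf (pmf_of_set {1..Suc i}) \<Otimes>\<^sub>M measure_pmf (bernoulli_pmf p)"
  have psD: "prob_space ?D" by (rule prob_space_exponential_density) simp
  have psQ: "prob_space ?Q" by (intro prob_space_pair prob_space_measure_pmf)
  interpret Q: prob_space ?Q by (rule psQ)
  have x: "{x} = {fst x} \<times> {snd x}" by (cases x) simp
  have "emeasure (Mk p i) (UNIV \<times> {x}) = emeasure ?D UNIV * emeasure ?Q {x}"
  proof -
    have "space ?D = UNIV" by simp
    then have sD: "UNIV \<in> sets ?D" using sets.top[of ?D] by simp
    have sQ: "{x} \<in> sets ?Q" by (simp add: sets_pmf_pair)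
    show ?thesis unfolding Mk_def by (rule Q.emeasure_pair_measure_Times[OF sD sQ])
  qed
  also have "emeasure ?D UNIV = 1"
    using prob_space.emeasure_space_1[OF psD] by simp
  also have "emeasure ?Q {x} = emeasure (measure_pmf (pmf_of_set {1..Suc i})) {fst x}
      * emeasure (measure_pmf (bernoulli_pmf p)) {snd x}"
    unfolding x by (rule sigma_finite_measure.emeasure_pair_measure_Times[OF
        prob_space_imp_sigma_finite[OF prob_space_measure_pmf]]) simp_all
  finally have E: "emeasure (Mk p i) (UNIV \<times> {x}) = ennreal (pmf (pmf_of_set {1..Suc i}) (fst x))
      * ennreal (pmf (bernoulli_pmf p) (snd x))"
    by (simp only: emeasure_pmf_single mult_1)
  show ?thesis unfolding E by (rule ennreal_mult[OF pmf_nonneg pmf_nonneg, symmetric])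
qed

lemma shift_set: fixes n :: nat shows "1 \<le> n \<Longrightarrow> {2..n} = (\<lambda>i. i + 2) ` {..<n - 1}"
proof (rule set_eqI)
  fix k assume n1: "1 \<le> n"
  show "k \<in> {2..n} \<longleftrightarrow> k \<in> (\<lambda>i. i + 2) ` {..<n - 1}"
  proof
    assume k: "k \<in> {2..n}"
    then have "k = (k - 2) + 2" "k - 2 \<in> {..<n - 1}" by auto
    then show "k \<in> (\<lambda>i. i + 2) ` {..<n - 1}" by blast
  next
    assume "k \<in> (\<lambda>i. i + 2) ` {..<n - 1}"
    then show "k \<in> {2..n}" by auto
  qed
qed

lemma prod_shift:
  fixes f :: "nat \<Rightarrow> 'a::comm_monoid_mult"
  assumes "1 \<le> n"
  shows "(\<Prod>k\<in>{2..n}. f k) = (\<Prod>i<n - 1. f (i + 2))"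
proof -
  have "(\<Prod>k\<in>{2..n}. f k) = (\<Prod>k\<in>(\<lambda>i. i + 2) ` {..<n - 1}. f k)" using shift_set[OF assms] by simp
  also have "\<dots> = (\<Prod>i<n - 1. f (i + 2))" by (subst prod.reindex) (auto simp: inj_on_def)
  finally show ?thesis .
qed

lemma emeasure_G_point:
  assumes n1: "1 \<le> n"
  shows "emeasure (yule_space p) (G n -` {dec n l} \<inter> space (yule_space p))
    = ennreal (\<Prod>i<n - 1. pmf (pmf_of_set {1..Suc i}) (fst (l ! i)) * pmf (bernoulli_pmf p) (snd (l ! i)))"
proof -
  have sets: "UNIV \<times> {l ! i} \<in> sets (Mk p i)" for i
  proof -
    let ?D = "density lborel (exponential_density (real (Suc i)))"
    have "space ?D = UNIV" by simp
    then have sD: "UNIV \<in> sets ?D" using sets.top[of ?D] by simp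
    have sQ: "{l ! i} \<in> sets (measure_pmf (pmf_of_set {1..Suc i}) \<Otimes>\<^sub>M measure_pmf (bernoulli_pmf p))"
      by (simp add: sets_pmf_pair)
    show ?thesis unfolding Mk_def by (rule pair_measureI[OF sD sQ])
  qed
  have "emeasure (yule_space p) (G n -` {dec n l} \<inter> space (yule_space p))
      = emeasure (PiM UNIV (Mk p)) (prod_emb UNIV (Mk p) {..<n - 1} (\<Pi>\<^sub>E i\<in>{..<n - 1}. UNIV \<times> {l ! i}))"
    unfolding G_preimage by (simp only: yule_space_Mk)
  also have "\<dots> = (\<Prod>i<n - 1. emeasure (Mk p i) (UNIV \<times> {l ! i}))"
    by (rule product_prob_space.emeasure_PiM_emb[OF pps_Mk]) (simp_all add: sets)
  also have "\<dots> = (\<Prod>i<n - 1. ennreal (pmf (pmf_of_set {1..Suc i}) (fst (l ! i)) * pmf (bernoulli_pmf p) (snd (l ! i))))"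
    by (simp only: emeasure_Mk_point)
  also have "\<dots> = ennreal (\<Prod>i<n - 1. pmf (pmf_of_set {1..Suc i}) (fst (l ! i)) * pmf (bernoulli_pmf p) (snd (l ! i)))"
    by (rule prod_ennreal) simp
  finally show ?thesis .
qed

lemma RT_finite: "finite (recursive_trees n)"
  unfolding recursive_trees_def by (rule finite_PiE) auto

lemma RT_nonempty: "recursive_trees n \<noteq> {}"
  unfolding recursive_trees_def by (auto simp: PiE_eq_empty_iff)

lemma card_RT: "1 \<le> n \<Longrightarrow> card (recursive_trees n) = (\<Prod>i<n - 1. Suc i)"
proof -
  assume n1: "1 \<le> n"
  have "card (recursive_trees n) = (\<Prod>k\<in>{2..n}. card {1..<k})"
    unfolding recursive_trees_def by (rule card_PiE) simp
  also have "\<dots> = (\<Prod>i<n - 1. card {1..<i + 2})" by (rule prod_shift[OF n1])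
  also have "\<dots> = (\<Prod>i<n - 1. Suc i)" by simp
  finally show ?thesis .
qed

lemma dec_in_RT_iff:
  "fst (dec n l) \<in> recursive_trees n \<longleftrightarrow> (\<forall>i<n - 1. fst (l ! i) \<in> {1..Suc i})"
proof -
  have ext: "fst (dec n l) \<in> extensional {2..n}" unfolding dec_def extensional_def by simp
  have "fst (dec n l) \<in> recursive_trees n \<longleftrightarrow> (\<forall>k\<in>{2..n}. fst (l ! (k - 2)) \<in> {1..<k})"
    unfolding recursive_trees_def PiE_iff using ext by (simp add: dec_def)
  also have "\<dots> \<longleftrightarrow> (\<forall>i<n - 1. fst (l ! i) \<in> {1..Suc i})"
  proof
    assume H: "\<forall>k\<in>{2..n}. fst (l ! (k - 2)) \<in> {1..<k}"
    show "\<forall>i<n - 1. fst (l ! i) \<in> {1..Suc i}"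
    proof (intro allI impI)
      fix i assume "i < n - 1"
      then have "i + 2 \<in> {2..n}" by auto
      then show "fst (l ! i) \<in> {1..Suc i}" using H by fastforce
    qed
  next
    assume H: "\<forall>i<n - 1. fst (l ! i) \<in> {1..Suc i}"
    show "\<forall>k\<in>{2..n}. fst (l ! (k - 2)) \<in> {1..<k}"
    proof
      fix k assume k: "k \<in> {2..n}"
      then have "k - 2 < n - 1" by auto
      then have "fst (l ! (k - 2)) \<in> {1..Suc (k - 2)}" using H by blast
      then show "fst (l ! (k - 2)) \<in> {1..<k}" using k by auto
    qed
  qed
  finally show ?thesis .
qed

lemma pmf_perc_point:
  assumes n1: "1 \<le> n"
  shows "pmf (percolated_rrt n p) (dec n l)
    = (\<Prod>i<n - 1. pmf (pmf_of_set {1..Suc i}) (fst (l ! i)) * pmf (bernoulli_pmf p) (snd (l ! i)))"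
proof -
  define par where "par = fst (dec n l)"
  define keep where "keep = snd (dec n l)"
  have dpk: "dec n l = (par, keep)" unfolding par_def keep_def by simp
  have a: "pmf (pmf_of_set (recursive_trees n)) par
      = (\<Prod>i<n - 1. indicator {1..Suc i} (fst (l ! i))) / (\<Prod>i<n - 1. real (Suc i))"
  proof -
    have "pmf (pmf_of_set (recursive_trees n)) par = indicator (recursive_trees n) par / card (recursive_trees n)"
      using RT_finite RT_nonempty by simp
    also have "indicator (recursive_trees n) par = (\<Prod>i<n - 1. indicator {1..Suc i} (fst (l ! i)) :: real)"
    proof (cases "par \<in> recursive_trees n")
      case True
      then have "\<forall>i<n - 1. fst (l ! i) \<in> {1..Suc i}" using dec_in_RT_iff par_def by simp
      then show ?thesis using True by simp
    next
      case False
      then obtain i where i: "i < n - 1" "fst (l ! i) \<notin> {1..Suc i}" using dec_in_RT_iff par_def by blast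
      have "(\<Prod>i<n - 1. indicator {1..Suc i} (fst (l ! i)) :: real) = 0"
        by (rule prod_zero) (use i in \<open>auto intro!: bexI[of _ i]\<close>)
      then show ?thesis using False by simp
    qed
    also have "real (card (recursive_trees n)) = (\<Prod>i<n - 1. real (Suc i))"
      using card_RT[OF n1] by simp
    finally show ?thesis .
  qed
  have b: "pmf (Pi_pmf {2..n} False (\<lambda>_. bernoulli_pmf p)) keep
      = (\<Prod>i<n - 1. pmf (bernoulli_pmf p) (snd (l ! i)))"
  proof -
    have "\<forall>x. x \<notin> {2..n} \<longrightarrow> keep x = False" unfolding keep_def dec_def by simp
    then have "pmf (Pi_pmf {2..n} False (\<lambda>_. bernoulli_pmf p)) keep = (\<Prod>k\<in>{2..n}. pmf (bernoulli_pmf p) (keep k))"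
      by (simp add: pmf_Pi)
    also have "\<dots> = (\<Prod>i<n - 1. pmf (bernoulli_pmf p) (keep (i + 2)))" by (rule prod_shift[OF n1])
    also have "\<dots> = (\<Prod>i<n - 1. pmf (bernoulli_pmf p) (snd (l ! i)))"
      unfolding keep_def dec_def by (intro prod.cong refl) auto
    finally show ?thesis .
  qed
  have "pmf (percolated_rrt n p) (dec n l)
      = pmf (pmf_of_set (recursive_trees n)) par * pmf (Pi_pmf {2..n} False (\<lambda>_. bernoulli_pmf p)) keep"
    unfolding percolated_rrt_def dpk by (rule pmf_pair)
  also have "\<dots> = (\<Prod>i<n - 1. indicator {1..Suc i} (fst (l ! i)) / real (Suc i) * pmf (bernoulli_pmf p) (snd (l ! i)))"
    unfolding a b by (simp add: prod.distrib prod_dividef)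
  also have "\<dots> = (\<Prod>i<n - 1. pmf (pmf_of_set {1..Suc i}) (fst (l ! i)) * pmf (bernoulli_pmf p) (snd (l ! i)))"
    by (intro prod.cong refl) simp
  finally show ?thesis .
qed

lemma G_law:
  assumes n1: "1 \<le> n"
  shows "distr (yule_space p) (measure_pmf (percolated_rrt n p)) (G n) = measure_pmf (percolated_rrt n p)"
proof -
  have mG: "G n \<in> measurable (yule_space p) (measure_pmf (percolated_rrt n p))"
    using meas_G by simp
  show ?thesis
  proof (rule measure_eqI_countable_AE[where \<Omega> = "range (dec n)"])
    show "sets (distr (yule_space p) (measure_pmf (percolated_rrt n p)) (G n)) = UNIV" by simp
    show "sets (measure_pmf (percolated_rrt n p)) = UNIV" by simp
    show "countable (range (dec n))" by (rule countable_image) simp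
    show "AE x in distr (yule_space p) (measure_pmf (percolated_rrt n p)) (G n). x \<in> range (dec n)"
      by (subst AE_distr_iff[OF mG]) (auto simp: G_def)
    show "AE x in measure_pmf (percolated_rrt n p). x \<in> range (dec n)"
    proof (subst AE_measure_pmf_iff, intro ballI)
      fix y assume y: "y \<in> set_pmf (percolated_rrt n p)"
      obtain par keep where yy: "y = (par, keep)" by (cases y)
      have par: "par \<in> recursive_trees n" and keep: "keep \<in> set_pmf (Pi_pmf {2..n} False (\<lambda>_. bernoulli_pmf p))"
        using y RT_finite RT_nonempty unfolding yy percolated_rrt_def by auto
      have kf: "keep k = False" if "k \<notin> {2..n}" for k
        using set_Pi_pmf_subset[of "{2..n}" False "\<lambda>_. bernoulli_pmf p"] keep that by auto
      have pu: "par k = undefined" if "k \<notin> {2..n}" for k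
        using par that unfolding recursive_trees_def by (rule PiE_arb)
      define l where "l = map (\<lambda>i. (par (i + 2), keep (i + 2))) [0..<n - 1]"
      have "dec n l = (par, keep)"
      proof -
        have "l ! (k - 2) = (par k, keep k)" if "k \<in> {2..n}" for k
        proof -
          have "k - 2 < n - 1" using that by auto
          moreover have "k - 2 + 2 = k" using that by auto
          ultimately show ?thesis unfolding l_def by simp
        qed
        then show ?thesis unfolding dec_def using kf pu by (auto simp: fun_eq_iff)
      qed
      then show "y \<in> range (dec n)" unfolding yy by (metis rangeI)
    qed
    fix x assume "x \<in> range (dec n)"
    then obtain l where x: "x = dec n l" by auto
    have "emeasure (distr (yule_space p) (measure_pmf (percolated_rrt n p)) (G n)) {x}
        = emeasure (yule_space p) (G n -` {x} \<inter> space (yule_space p))"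
      by (rule emeasure_distr[OF mG]) simp
    also have "\<dots> = ennreal (pmf (percolated_rrt n p) x)"
      unfolding x emeasure_G_point[OF n1] pmf_perc_point[OF n1] ..
    also have "\<dots> = emeasure (measure_pmf (percolated_rrt n p)) {x}"
      by (simp add: emeasure_pmf_single)
    finally show "emeasure (distr (yule_space p) (measure_pmf (percolated_rrt n p)) (G n)) {x}
        = emeasure (measure_pmf (percolated_rrt n p)) {x}" .
  qed
qed

theorem lemma5p1:
  fixes p :: real and n :: nat
  assumes "0 \<le> p" and "p \<le> 1" and "1 \<le> n"
  shows "distr (measure_pmf (percolated_rrt n p)) (PiM UNIV (\<lambda>_::nat. count_space (UNIV :: nat set)))
             (\<lambda>(par, keep). cluster_sizes n par keep)
       = distr (yule_space p) (PiM UNIV (\<lambda>_::nat. count_space (UNIV :: nat set)))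
             (\<lambda>\<omega>. \<lambda>i. yule_Y \<omega> i (yule_tau \<omega> n))"
proof -
  note n1 = assms(3)
  define N where "N = PiM UNIV (\<lambda>_::nat. count_space (UNIV :: nat set))"
  define K where "K = measure_pmf (percolated_rrt n p)"
  define Hf where "Hf = (\<lambda>x::(nat \<Rightarrow> nat) \<times> (nat \<Rightarrow> bool). \<lambda>i. card {w\<in>{1..n}. ty (fst x) (snd x) (n - 1) w = i})"
  have spN: "space N = UNIV" unfolding N_def by (simp add: space_PiM)
  have mHK: "f \<in> measurable K N" for f unfolding K_def using spN by simp
  have mHc: "Hf \<in> measurable (count_space UNIV) N" using spN by simp
  have mG: "G n \<in> measurable (yule_space p) K" unfolding K_def using meas_G by simp
  have "distr (yule_space p) N (\<lambda>\<omega>. \<lambda>i. yule_Y \<omega> i (yule_tau \<omega> n))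
      = distr (yule_space p) N (\<lambda>\<omega>. Hf (G n \<omega>))"
  proof (rule distr_cong_AE)
    show "AE \<omega> in yule_space p. (\<lambda>i. yule_Y \<omega> i (yule_tau \<omega> n)) = Hf (G n \<omega>)"
      using AE_pos by eventually_elim (simp add: Y_eq[OF n1] Hf_def)
    show "(\<lambda>\<omega>. \<lambda>i. yule_Y \<omega> i (yule_tau \<omega> n)) \<in> measurable (yule_space p) N"
      unfolding N_def by (rule meas_Y[OF n1])
    show "(\<lambda>\<omega>. Hf (G n \<omega>)) \<in> measurable (yule_space p) N"
      by (rule measurable_compose[OF meas_G mHc])
  qed simp_all
  also have "\<dots> = distr (distr (yule_space p) K (G n)) N Hf"
    by (subst distr_distr[OF mHK mG]) (simp add: comp_def)
  also have "\<dots> = distr K N Hf" unfolding K_def by (subst G_law[OF n1]) (rule refl)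
  also have "\<dots> = distr K N (\<lambda>(par, keep). cluster_sizes n par keep)"
  proof (rule distr_cong_AE)
    show "AE x in K. Hf x = (\<lambda>(par, keep). cluster_sizes n par keep) x"
      unfolding K_def
    proof (subst AE_measure_pmf_iff, intro ballI)
      fix y assume y: "y \<in> set_pmf (percolated_rrt n p)"
      obtain par keep where yy: "y = (par, keep)" by (cases y)
      have par: "par \<in> recursive_trees n"
        using y RT_finite RT_nonempty unfolding yy percolated_rrt_def by auto
      show "Hf y = (\<lambda>(par, keep). cluster_sizes n par keep) y"
        unfolding yy Hf_def using cluster_sizes_ty[OF n1 par] by (simp add: fun_eq_iff)
    qed
  qed (simp_all add: mHK)
  finally show ?thesis unfolding N_def K_def by simp
qed


end
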